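(* Let $\lambda\neq 0,1$ be real, let $I\subset\mathbb{R}$ be an open interval, and let $x+iy:I\to\mathbb{C}$ be a smooth immersion. Consider the Levi-flat hypersurface $$\Sigma=\{[1,\ e^{w+x(r)+iy(r)},\ e^{\lambda w}]: w\in\mathbb{C},\ r\in I\}\subset\mathbb{CP}^2,$$ with $\mathbb{CP}^2$ given the Fubini–Study metric. Then $\Sigma$ is minimal if and only if $y$ is constant on $I$.
   Context: A real hypersurface is minimal if its mean curvature vanishes. The Fubini–Study metric is taken in unitary homogeneous coordinates $[Z_0,Z_1,Z_2]$. *)

theory Defs
  imports "HOL-Analysis.Analysis"
begin

text \<open>We work in the affine chart Z0 = 1 of CP^2, i.e. C^2 = complex \<times> complex,
  which contains the whole hypersurface. Hermitian product on C^2.\<close>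
definition herm :: "complex \<times> complex \<Rightarrow> complex \<times> complex \<Rightarrow> complex" where
  "herm u v = fst u * cnj (fst v) + snd u * cnj (snd v)"

text \<open>Fubini-Study metric in the affine chart (real part of the Hermitian metric
  induced from unitary homogeneous coordinates [1,z1,z2]): g_z(u,v).\<close>
definition FS :: "complex \<times> complex \<Rightarrow> complex \<times> complex \<Rightarrow> complex \<times> complex \<Rightarrow> real" where
  "FS z u v = Re (((1 + herm z z) * herm u v - herm u z * herm z v) / (1 + herm z z)^2)"

definition dFS :: "complex \<times> complex \<Rightarrow> complex \<times> complex \<Rightarrow> complex \<times> complex \<Rightarrow> complex \<times> complex \<Rightarrow> real" where
  "dFS z u v w = deriv (\<lambda>t. FS (z + t *\<^sub>R u) v w) 0"

definition pd :: "3 \<Rightarrow> (real^3 \<Rightarrow> complex \<times> complex) \<Rightarrow> real^3 \<Rightarrow> complex \<times> complex" where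
  "pd i f p = vector_derivative (\<lambda>h. f (p + h *\<^sub>R axis i 1)) (at 0)"

definition ind_metric :: "(real^3 \<Rightarrow> complex \<times> complex) \<Rightarrow> real^3 \<Rightarrow> real^3^3" where
  "ind_metric f p = (\<chi> a b. FS (f p) (pd a f p) (pd b f p))"

text \<open>Second fundamental form paired with a vector n:
  g(\<nabla>_{\<partial>a} \<partial>_b f, n), with the Levi-Civita connection of FS given by the Koszul formula.\<close>
definition second_ff :: "(real^3 \<Rightarrow> complex \<times> complex) \<Rightarrow> real^3 \<Rightarrow> complex \<times> complex \<Rightarrow> 3 \<Rightarrow> 3 \<Rightarrow> real" where
  "second_ff f p n a b =
     FS (f p) (pd a (pd b f) p) n
     + (dFS (f p) (pd a f p) (pd b f p) n + dFS (f p) (pd b f p) (pd a f p) n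
        - dFS (f p) n (pd a f p) (pd b f p)) / 2"

definition mean_curv :: "(real^3 \<Rightarrow> complex \<times> complex) \<Rightarrow> real^3 \<Rightarrow> complex \<times> complex \<Rightarrow> real" where
  "mean_curv f p n = (\<Sum>a\<in>UNIV. \<Sum>b\<in>UNIV. matrix_inv (ind_metric f p) $ a $ b * second_ff f p n a b)"

definition minimal_param :: "(real^3 \<Rightarrow> complex \<times> complex) \<Rightarrow> (real^3) set \<Rightarrow> bool" where
  "minimal_param f U \<longleftrightarrow>
     (\<forall>p\<in>U. \<forall>n. (\<forall>a. FS (f p) n (pd a f p) = 0) \<longrightarrow> mean_curv f p n = 0)"

definition smooth_on :: "(real \<Rightarrow> real) \<Rightarrow> real set \<Rightarrow> bool" where
  "smooth_on g I \<longleftrightarrow> (\<forall>k. \<forall>r\<in>I. ((deriv ^^ k) g) field_differentiable (at r))"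

text \<open>The parametrization (s,t,r) \<mapsto> [1, e^{w+x(r)+iy(r)}, e^{\<lambda> w}], w = s + i t.\<close>
definition sigma :: "real \<Rightarrow> (real \<Rightarrow> real) \<Rightarrow> (real \<Rightarrow> real) \<Rightarrow> real^3 \<Rightarrow> complex \<times> complex" where
  "sigma lam x y p =
     (exp (Complex (p$1) (p$2) + Complex (x (p$3)) (y (p$3))),
      exp (complex_of_real lam * Complex (p$1) (p$2)))"

end

theory Submission
  imports Defs "HOL-Real_Asymp.Real_Asymp"
begin


definition hh :: "complex \<times> complex \<Rightarrow> complex \<times> complex \<Rightarrow> complex \<times> complex \<Rightarrow> complex" where
  "hh z u v = ((1 + herm z z) * herm u v - herm u z * herm z v) / (1 + herm z z)^2"

lemma FS_hh: "FS z u v = Re (hh z u v)"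
  by (simp add: FS_def hh_def)

definition smul :: "complex \<Rightarrow> complex \<times> complex \<Rightarrow> complex \<times> complex" where
  "smul a u = (a * fst u, a * snd u)"

lemma herm_smul1: "herm (smul a u) v = a * herm u v"
  by (simp add: herm_def smul_def algebra_simps)
lemma herm_smul2: "herm u (smul a v) = cnj a * herm u v"
  by (simp add: herm_def smul_def algebra_simps)
lemma herm_add1: "herm (u + u') v = herm u v + herm u' v"
  by (simp add: herm_def algebra_simps)
lemma herm_add2: "herm u (v + v') = herm u v + herm u v'"
  by (simp add: herm_def algebra_simps)
lemma herm_diff1: "herm (u - u') v = herm u v - herm u' v"
  by (simp add: herm_def algebra_simps)
lemma herm_diff2: "herm u (v - v') = herm u v - herm u v'"
  by (simp add: herm_def algebra_simps)
lemma herm_cnj: "cnj (herm u v) = herm v u"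
  by (simp add: herm_def)
lemma herm_scaleR1: "herm (t *\<^sub>R u) v = of_real t * herm u v"
  by (simp add: herm_def scaleR_conv_of_real algebra_simps)
lemma herm_scaleR2: "herm u (t *\<^sub>R v) = of_real t * herm u v"
  by (simp add: herm_def scaleR_conv_of_real algebra_simps)
lemma herm_self_real: "herm z z = of_real ((cmod (fst z))^2 + (cmod (snd z))^2)"
  by (simp only: herm_def of_real_add complex_norm_square)
lemma one_herm_ne0: "1 + herm z z \<noteq> 0"
proof -
  have "1 + herm z z = of_real (1 + ((cmod (fst z))^2 + (cmod (snd z))^2))"
    by (simp add: herm_self_real)
  moreover have "1 + ((cmod (fst z))^2 + (cmod (snd z))^2) > 0"
    by (simp add: add_pos_nonneg)
  ultimately show ?thesis by (metis of_real_eq_0_iff order_less_irrefl)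
qed
lemma cnj_one_herm: "cnj (1 + herm z z) = 1 + herm z z"
  by (simp add: herm_cnj)

lemma hh_smul1: "hh z (smul a u) v = a * hh z u v"
  by (simp add: hh_def herm_smul1 algebra_simps add_divide_distrib diff_divide_distrib)
lemma hh_smul2: "hh z u (smul a v) = cnj a * hh z u v"
  by (simp add: hh_def herm_smul2 algebra_simps add_divide_distrib diff_divide_distrib)
lemma hh_add1: "hh z (u + u') v = hh z u v + hh z u' v"
  by (simp add: hh_def herm_add1 algebra_simps add_divide_distrib diff_divide_distrib)
lemma hh_diff2: "hh z u (v - v') = hh z u v - hh z u v'"
  by (simp add: hh_def herm_diff2 algebra_simps add_divide_distrib diff_divide_distrib)
lemma hh_scaleR1: "hh z (t *\<^sub>R u) v = of_real t * hh z u v"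
  by (simp add: hh_def herm_scaleR1 algebra_simps add_divide_distrib diff_divide_distrib)

definition dFSf where
  "dFSf z u v w = Re (((herm u z + herm z u) * herm v w - (herm v z * herm u w + herm v u * herm z w)) / (1 + herm z z)^2
     - 2 * (herm u z + herm z u) * ((1 + herm z z) * herm v w - herm v z * herm z w) / (1 + herm z z)^3)"

lemma dFS_eq: "dFS z u v w = dFSf z u v w"
proof -
  define G where "G = (\<lambda>\<zeta>::complex. ((1 + herm z z + \<zeta> * (herm u z + herm z u) + \<zeta>^2 * herm u u) * herm v w
      - (herm v z + \<zeta> * herm v u) * (herm z w + \<zeta> * herm u w)) / (1 + herm z z + \<zeta> * (herm u z + herm z u) + \<zeta>^2 * herm u u)^2)"
  have eq: "FS (z + t *\<^sub>R u) v w = Re (G (of_real t))" for t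
    unfolding FS_def G_def
    by (simp add: herm_add1 herm_add2 herm_scaleR1 herm_scaleR2 power2_eq_square algebra_simps)
  have ne: "1 + herm z z + 0 * (herm u z + herm z u) + 0^2 * herm u u \<noteq> 0"
    using one_herm_ne0[of z] by simp
  define H0 where "H0 = 1 + herm z z"
  define H1 where "H1 = herm u z + herm z u"
  define H2 where "H2 = herm u u"
  define a where "a = herm v z"
  define b where "b = herm v u"
  define a' where "a' = herm z w"
  define b' where "b' = herm u w"
  define c where "c = herm v w"
  have G_alt: "G = (\<lambda>\<zeta>. ((H0 + \<zeta> * H1 + \<zeta>^2 * H2) * c - (a + \<zeta> * b) * (a' + \<zeta> * b')) / (H0 + \<zeta> * H1 + \<zeta>^2 * H2)^2)"
    unfolding G_def H0_def H1_def H2_def a_def b_def a'_def b'_def c_def by (simp add: add.assoc)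
  have H0: "H0 \<noteq> 0" unfolding H0_def by (rule one_herm_ne0)
  have d1: "((\<lambda>\<zeta>. (H0 + \<zeta> * H1 + \<zeta>^2 * H2) * c - (a + \<zeta> * b) * (a' + \<zeta> * b')) has_field_derivative
      (H1 * c - (a * b' + b * a'))) (at 0)"
    by (auto intro!: derivative_eq_intros simp: algebra_simps)
  have d2: "((\<lambda>\<zeta>. (H0 + \<zeta> * H1 + \<zeta>^2 * H2)^2) has_field_derivative (2 * H0 * H1)) (at 0)"
    by (auto intro!: derivative_eq_intros simp: algebra_simps)
  have "(G has_field_derivative
      ((H1 * c - (a * b' + b * a')) * (H0^2) - (H0 * c - a * a') * (2 * H0 * H1)) / (H0^2 * H0^2)) (at (of_real 0))"
    unfolding G_alt using DERIV_divide[OF d1 d2] H0 by (simp add: power2_eq_square)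
  also have "((H1 * c - (a * b' + b * a')) * (H0^2) - (H0 * c - a * a') * (2 * H0 * H1)) / (H0^2 * H0^2) =
     ((herm u z + herm z u) * herm v w - (herm v z * herm u w + herm v u * herm z w)) / (1 + herm z z)^2
     - 2 * (herm u z + herm z u) * ((1 + herm z z) * herm v w - herm v z * herm z w) / (1 + herm z z)^3"
    unfolding H0_def[symmetric] H1_def[symmetric] a_def[symmetric] b_def[symmetric] a'_def[symmetric] b'_def[symmetric] c_def[symmetric]
    using H0 by (simp add: field_simps power2_eq_square power3_eq_cube)
  finally have D: "(G has_field_derivative ( ((herm u z + herm z u) * herm v w - (herm v z * herm u w + herm v u * herm z w)) / (1 + herm z z)^2
     - 2 * (herm u z + herm z u) * ((1 + herm z z) * herm v w - herm v z * herm z w) / (1 + herm z z)^3)) (at (of_real 0))" .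
  show ?thesis
    unfolding dFS_def dFSf_def eq
    by (rule DERIV_imp_deriv, rule has_field_derivative_Re, rule has_vector_derivative_real_field, rule D)
qed


definition Gam where
  "Gam z X Y = smul (- 1 / (1 + herm z z)) (smul (herm X z) Y + smul (herm Y z) X)"

lemma Re_of_real_eq: "complex_of_real (Re w) = (w + cnj w) / 2"
  by (simp add: complex_add_cnj)

lemma koszul:
  "(dFSf z X Y n + dFSf z Y X n - dFSf z n X Y) / 2 = FS z (Gam z X Y) n"
proof -
  have M: "1 + herm z z \<noteq> 0" by (rule one_herm_ne0)
  have "complex_of_real ((dFSf z X Y n + dFSf z Y X n - dFSf z n X Y) / 2) = complex_of_real (FS z (Gam z X Y) n)"
    unfolding dFSf_def FS_hh hh_def Gam_def of_real_add of_real_diff of_real_divide Re_of_real_eq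
    apply (simp add: herm_smul1 herm_add1 herm_add2 herm_smul2 herm_cnj cnj_one_herm)
    apply (rule impI)
    apply (simp add: divide_simps)
    apply algebra
    done
  then show ?thesis by (rule of_real_eq_iff[THEN iffD1])
qed


definition wv :: "real^3 \<Rightarrow> complex" where "wv p = Complex (p$1) (p$2)"
definition Z1 :: "(real \<Rightarrow> real) \<Rightarrow> (real \<Rightarrow> real) \<Rightarrow> real^3 \<Rightarrow> complex" where
  "Z1 x y p = exp (wv p + Complex (x (p$3)) (y (p$3)))"
definition Z2 :: "real \<Rightarrow> real^3 \<Rightarrow> complex" where
  "Z2 lam p = exp (of_real lam * wv p)"
definition cc :: "(real \<Rightarrow> real) \<Rightarrow> (real \<Rightarrow> real) \<Rightarrow> real \<Rightarrow> complex" where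
  "cc x y r = Complex (deriv x r) (deriv y r)"
definition dd :: "(real \<Rightarrow> real) \<Rightarrow> (real \<Rightarrow> real) \<Rightarrow> real \<Rightarrow> complex" where
  "dd x y r = Complex (deriv (deriv x) r) (deriv (deriv y) r)"

lemma sigma_alt: "sigma lam x y = (\<lambda>q. (Z1 x y q, Z2 lam q))"
  by (simp add: fun_eq_iff sigma_def Z1_def Z2_def wv_def)

lemma comp_line: "(p + h *\<^sub>R axis a 1) $ j = p $ j + (if j = a then h else 0)"
  by (simp add: axis_def)

lemma three_ne: "(1::3) \<noteq> 2" "(1::3) \<noteq> 3" "(2::3) \<noteq> 3" "(2::3) \<noteq> 1" "(3::3) \<noteq> 1" "(3::3) \<noteq> 2"
  by simp_all

lemma wv_line1: "wv (p + h *\<^sub>R axis 1 1) = wv p + of_real h"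
  unfolding wv_def comp_line by (simp add: complex_eq_iff)
lemma wv_line2: "wv (p + h *\<^sub>R axis 2 1) = wv p + \<i> * of_real h"
  unfolding wv_def comp_line by (simp add: complex_eq_iff)
lemma wv_line3: "wv (p + h *\<^sub>R axis 3 1) = wv p"
  unfolding wv_def comp_line by simp
lemma c3_line1: "(p + h *\<^sub>R axis 1 1) $ 3 = (p::real^3) $ 3"
  unfolding comp_line by simp
lemma c3_line2: "(p + h *\<^sub>R axis 2 1) $ 3 = (p::real^3) $ 3"
  unfolding comp_line by simp
lemma c3_line3: "(p + h *\<^sub>R axis 3 1) $ 3 = (p::real^3) $ 3 + h"
  unfolding comp_line by simp

lemma hvd_rf: "(F has_field_derivative D) (at 0) \<Longrightarrow> ((\<lambda>h. F (of_real h)) has_vector_derivative D) (at 0)"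
  using has_vector_derivative_real_field[of F D 0 UNIV] by simp

lemma Z1_d1: "((\<lambda>h. Z1 x y (p + h *\<^sub>R axis 1 1)) has_vector_derivative Z1 x y p) (at 0)"
proof -
  have "((\<lambda>\<zeta>. exp (wv p + \<zeta> + Complex (x (p$3)) (y (p$3)))) has_field_derivative
          exp (wv p + 0 + Complex (x (p$3)) (y (p$3)))) (at 0)"
    by (auto intro!: derivative_eq_intros)
  from hvd_rf[OF this] show ?thesis
    unfolding Z1_def wv_line1 c3_line1 by simp
qed

lemma Z1_d2: "((\<lambda>h. Z1 x y (p + h *\<^sub>R axis 2 1)) has_vector_derivative \<i> * Z1 x y p) (at 0)"
proof -
  have "((\<lambda>\<zeta>. exp (wv p + \<i> * \<zeta> + Complex (x (p$3)) (y (p$3)))) has_field_derivative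
          exp (wv p + \<i> * 0 + Complex (x (p$3)) (y (p$3))) * (\<i> * 1)) (at 0)"
    by (auto intro!: derivative_eq_intros)
  from hvd_rf[OF this] show ?thesis
    unfolding Z1_def wv_line2 c3_line2 by (simp add: mult.commute)
qed

lemma shift_deriv: "(f has_real_derivative f') (at r) \<Longrightarrow> ((\<lambda>h. f (r + h)) has_real_derivative f') (at 0)"
  using DERIV_shift[of f f' 0 r] by (simp add: add.commute)

lemma Z1_d3:
  assumes "(x has_real_derivative x') (at (p$3))" "(y has_real_derivative y') (at (p$3))"
  shows "((\<lambda>h. Z1 x y (p + h *\<^sub>R axis 3 1)) has_vector_derivative Complex x' y' * Z1 x y p) (at 0)"
proof -
  define g where "g = (\<lambda>h. wv p + Complex (x (p$3 + h)) (y (p$3 + h)))"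
  have g: "(g has_vector_derivative Complex x' y') (at 0)"
    unfolding has_vector_derivative_complex_iff g_def
    using shift_deriv[OF assms(1)] shift_deriv[OF assms(2)]
    by (auto intro!: derivative_eq_intros)
  have "((exp \<circ> g) has_vector_derivative (Complex x' y' * exp (g 0))) (at 0)"
    by (rule field_vector_diff_chain_at[OF g]) (rule DERIV_exp)
  then show ?thesis
    unfolding Z1_def wv_line3 c3_line3 by (simp add: g_def o_def)
qed

lemma Z2_d1: "((\<lambda>h. Z2 lam (p + h *\<^sub>R axis 1 1)) has_vector_derivative of_real lam * Z2 lam p) (at 0)"
proof -
  have "((\<lambda>\<zeta>. exp (of_real lam * (wv p + \<zeta>))) has_field_derivative
          exp (of_real lam * (wv p + 0)) * (of_real lam * 1)) (at 0)"
    by (auto intro!: derivative_eq_intros)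
  from hvd_rf[OF this] show ?thesis
    unfolding Z2_def wv_line1 by (simp add: mult.commute)
qed

lemma Z2_d2: "((\<lambda>h. Z2 lam (p + h *\<^sub>R axis 2 1)) has_vector_derivative \<i> * of_real lam * Z2 lam p) (at 0)"
proof -
  have "((\<lambda>\<zeta>. exp (of_real lam * (wv p + \<i> * \<zeta>))) has_field_derivative
          exp (of_real lam * (wv p + \<i> * 0)) * (of_real lam * (\<i> * 1))) (at 0)"
    by (auto intro!: derivative_eq_intros)
  from hvd_rf[OF this] show ?thesis
    unfolding Z2_def wv_line2 by (simp add: mult.commute mult.left_commute)
qed

lemma Z2_d3: "((\<lambda>h. Z2 lam (p + h *\<^sub>R axis 3 1)) has_vector_derivative 0) (at 0)"
  unfolding Z2_def wv_line3 by simp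

lemma cc_d1: "((\<lambda>h. cc x y (((p::real^3) + h *\<^sub>R axis 1 1)$3)) has_vector_derivative 0) (at 0)"
  unfolding c3_line1 by simp
lemma cc_d2: "((\<lambda>h. cc x y (((p::real^3) + h *\<^sub>R axis 2 1)$3)) has_vector_derivative 0) (at 0)"
  unfolding c3_line2 by simp
lemma cc_d3:
  assumes "(deriv x has_real_derivative deriv (deriv x) (p$3)) (at (p$3))"
          "(deriv y has_real_derivative deriv (deriv y) (p$3)) (at (p$3))"
  shows "((\<lambda>h. cc x y (((p::real^3) + h *\<^sub>R axis 3 1)$3)) has_vector_derivative dd x y (p$3)) (at 0)"
  unfolding c3_line3 cc_def dd_def has_vector_derivative_complex_iff
  using shift_deriv[OF assms(1)] shift_deriv[OF assms(2)] by simp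

lemma pd_eqI: "((\<lambda>h. g (p + h *\<^sub>R axis a 1)) has_vector_derivative D) (at 0) \<Longrightarrow> pd a g p = D"
  unfolding pd_def by (rule vector_derivative_at)

lemma pd_transfer:
  assumes "open S" "p \<in> S" "\<And>q. q \<in> S \<Longrightarrow> g q = g' q"
    "((\<lambda>h. g' (p + h *\<^sub>R axis a 1)) has_vector_derivative D) (at 0)"
  shows "pd a g p = D"
proof (rule pd_eqI)
  have op: "open ((\<lambda>h. p + h *\<^sub>R axis a 1) -` S)"
    by (rule continuous_open_vimage[OF assms(1)]) (auto intro!: continuous_intros)
  show "((\<lambda>h. g (p + h *\<^sub>R axis a 1)) has_vector_derivative D) (at 0)"
    by (rule has_vector_derivative_transform_within_open[OF assms(4) op]) (use assms in auto)
qed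

lemma pd1: "pd 1 (sigma lam x y) q = (Z1 x y q, of_real lam * Z2 lam q)"
  unfolding sigma_alt by (intro pd_eqI has_vector_derivative_Pair Z1_d1 Z2_d1)
lemma pd2: "pd 2 (sigma lam x y) q = (\<i> * Z1 x y q, \<i> * of_real lam * Z2 lam q)"
  unfolding sigma_alt by (intro pd_eqI has_vector_derivative_Pair Z1_d2 Z2_d2)
lemma pd3:
  assumes "(x has_real_derivative deriv x (q$3)) (at (q$3))" "(y has_real_derivative deriv y (q$3)) (at (q$3))"
  shows "pd 3 (sigma lam x y) q = (cc x y (q$3) * Z1 x y q, 0)"
  unfolding sigma_alt cc_def by (intro pd_eqI has_vector_derivative_Pair Z1_d3 Z2_d3 assms)

lemma pd1_fun: "pd 1 (sigma lam x y) = (\<lambda>q. (Z1 x y q, of_real lam * Z2 lam q))"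
  by (simp add: fun_eq_iff pd1)
lemma pd2_fun: "pd 2 (sigma lam x y) = (\<lambda>q. (\<i> * Z1 x y q, \<i> * of_real lam * Z2 lam q))"
  by (simp add: fun_eq_iff pd2)

lemma pd11: "pd 1 (pd 1 (sigma lam x y)) p = (Z1 x y p, of_real lam * (of_real lam * Z2 lam p))"
  unfolding pd1_fun by (intro pd_eqI has_vector_derivative_Pair Z1_d1 Z2_d1 has_vector_derivative_mult_right)
lemma pd21: "pd 2 (pd 1 (sigma lam x y)) p = (\<i> * Z1 x y p, of_real lam * (\<i> * of_real lam * Z2 lam p))"
  unfolding pd1_fun by (intro pd_eqI has_vector_derivative_Pair Z1_d2 Z2_d2 has_vector_derivative_mult_right)
lemma pd12: "pd 1 (pd 2 (sigma lam x y)) p = (\<i> * Z1 x y p, \<i> * of_real lam * (of_real lam * Z2 lam p))"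
  unfolding pd2_fun by (intro pd_eqI has_vector_derivative_Pair Z1_d1 Z2_d1 has_vector_derivative_mult_right)
lemma pd22: "pd 2 (pd 2 (sigma lam x y)) p = (\<i> * (\<i> * Z1 x y p), \<i> * of_real lam * (\<i> * of_real lam * Z2 lam p))"
  unfolding pd2_fun by (intro pd_eqI has_vector_derivative_Pair Z1_d2 Z2_d2 has_vector_derivative_mult_right)

context
  fixes I :: "real set" and lam :: real and x y :: "real \<Rightarrow> real" and p :: "real^3"
  assumes oI: "open I" and pI: "p$3 \<in> I"
    and dx: "\<And>r. r \<in> I \<Longrightarrow> (x has_real_derivative deriv x r) (at r)"
    and dy: "\<And>r. r \<in> I \<Longrightarrow> (y has_real_derivative deriv y r) (at r)"
begin

lemma pd31: "pd 3 (pd 1 (sigma lam x y)) p = (cc x y (p$3) * Z1 x y p, of_real lam * 0)"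
  unfolding pd1_fun cc_def by (intro pd_eqI has_vector_derivative_Pair Z1_d3 Z2_d3 has_vector_derivative_mult_right dx dy pI)
lemma pd32: "pd 3 (pd 2 (sigma lam x y)) p = (\<i> * (cc x y (p$3) * Z1 x y p), \<i> * of_real lam * 0)"
  unfolding pd2_fun cc_def by (intro pd_eqI has_vector_derivative_Pair Z1_d3 Z2_d3 has_vector_derivative_mult_right dx dy pI)

lemma S3_open: "open {q::real^3. q$3 \<in> I}"
  using open_vimage_vec_nth[OF oI, of 3] by (simp add: vimage_def)

lemma pd3_eq: "q \<in> {q. q$3 \<in> I} \<Longrightarrow> pd 3 (sigma lam x y) q = (\<lambda>q. (cc x y (q$3) * Z1 x y q, 0)) q"
  by (simp add: pd3 dx dy)

lemma pd13: "pd 1 (pd 3 (sigma lam x y)) p = (cc x y (p$3) * Z1 x y p, 0)"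
proof (rule pd_transfer[OF S3_open _ pd3_eq])
  show "p \<in> {q. q$3 \<in> I}" using pI by simp
  show "((\<lambda>h. (cc x y ((p + h *\<^sub>R axis 1 1)$3) * Z1 x y (p + h *\<^sub>R axis 1 1), 0)) has_vector_derivative
     (cc x y (p$3) * Z1 x y p, 0)) (at 0)"
    unfolding c3_line1 by (intro has_vector_derivative_Pair has_vector_derivative_mult_right Z1_d1 has_vector_derivative_const)
qed

lemma pd23: "pd 2 (pd 3 (sigma lam x y)) p = (cc x y (p$3) * (\<i> * Z1 x y p), 0)"
proof (rule pd_transfer[OF S3_open _ pd3_eq])
  show "p \<in> {q. q$3 \<in> I}" using pI by simp
  show "((\<lambda>h. (cc x y ((p + h *\<^sub>R axis 2 1)$3) * Z1 x y (p + h *\<^sub>R axis 2 1), 0)) has_vector_derivative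
     (cc x y (p$3) * (\<i> * Z1 x y p), 0)) (at 0)"
    unfolding c3_line2 by (intro has_vector_derivative_Pair has_vector_derivative_mult_right Z1_d2 has_vector_derivative_const)
qed

lemma pd33:
  assumes "(deriv x has_real_derivative deriv (deriv x) (p$3)) (at (p$3))"
          "(deriv y has_real_derivative deriv (deriv y) (p$3)) (at (p$3))"
  shows "pd 3 (pd 3 (sigma lam x y)) p = (cc x y (p$3) * (cc x y (p$3) * Z1 x y p) + dd x y (p$3) * Z1 x y p, 0)"
proof (rule pd_transfer[OF S3_open _ pd3_eq])
  show "p \<in> {q. q$3 \<in> I}" using pI by simp
  have "((\<lambda>h. cc x y ((p + h *\<^sub>R axis 3 1)$3) * Z1 x y (p + h *\<^sub>R axis 3 1)) has_vector_derivative
     cc x y ((p + 0 *\<^sub>R axis 3 1)$3) * (Complex (deriv x (p$3)) (deriv y (p$3)) * Z1 x y p) + dd x y (p$3) * Z1 x y (p + 0 *\<^sub>R axis 3 1)) (at 0)"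
    by (intro has_vector_derivative_mult cc_d3 Z1_d3 assms dx dy pI)
  then show "((\<lambda>h. (cc x y ((p + h *\<^sub>R axis 3 1)$3) * Z1 x y (p + h *\<^sub>R axis 3 1), 0)) has_vector_derivative
     (cc x y (p$3) * (cc x y (p$3) * Z1 x y p) + dd x y (p$3) * Z1 x y p, 0)) (at 0)"
    by (intro has_vector_derivative_Pair has_vector_derivative_const) (simp add: cc_def)
qed

end


definition Gf :: "real \<Rightarrow> real \<Rightarrow> complex \<Rightarrow> complex \<Rightarrow> complex \<Rightarrow> complex \<Rightarrow> complex" where
  "Gf A B \<alpha> \<beta> \<gamma> \<delta> = (of_real (A*(1+B)) * \<alpha> * cnj \<gamma> + of_real (B*(1+A)) * \<beta> * cnj \<delta>
      - of_real (A*B) * (\<alpha> * cnj \<delta> + \<beta> * cnj \<gamma>)) / of_real ((1+A+B)^2)"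

lemma cnj_via_norm: "a \<noteq> 0 \<Longrightarrow> cnj a = of_real ((cmod a)^2) / a"
proof -
  assume a: "a \<noteq> 0"
  have "a * cnj a = of_real ((cmod a)^2)" by (rule complex_norm_square[symmetric])
  then show ?thesis using a by (simp add: eq_divide_eq mult.commute)
qed

lemma hh_vec:
  assumes "a1 \<noteq> 0" "a2 \<noteq> 0"
  shows "hh (a1, a2) (\<alpha> * a1, \<beta> * a2) (\<gamma> * a1, \<delta> * a2) = Gf ((cmod a1)^2) ((cmod a2)^2) \<alpha> \<beta> \<gamma> \<delta>"
proof -
  define A where "A = (cmod a1)^2"
  define B where "B = (cmod a2)^2"
  have A0: "A \<ge> 0" "B \<ge> 0" by (simp_all add: A_def B_def)
  have N: "complex_of_real (1 + A + B) \<noteq> 0"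
    using A0 by (metis add_nonneg_nonneg of_real_eq_0_iff add_pos_nonneg zero_less_one order_less_irrefl)
  have e1: "cnj a1 = of_real A / a1" using assms(1) unfolding A_def by (rule cnj_via_norm)
  have e2: "cnj a2 = of_real B / a2" using assms(2) unfolding B_def by (rule cnj_via_norm)
  have N': "1 + (of_real A + of_real B) \<noteq> (0::complex)" using N by (simp add: add.assoc)
  show ?thesis
    unfolding hh_def herm_def Gf_def A_def[symmetric] B_def[symmetric]
    using assms N N'
    by (simp add: e1 e2 field_simps power2_eq_square)
qed

lemma Gam_vec:
  assumes "a1 \<noteq> 0" "a2 \<noteq> 0"
  shows "Gam (a1, a2) (\<alpha> * a1, \<beta> * a2) (\<gamma> * a1, \<delta> * a2) =
    ((- ((\<alpha> * of_real ((cmod a1)^2) + \<beta> * of_real ((cmod a2)^2)) * \<gamma> + (\<gamma> * of_real ((cmod a1)^2) + \<delta> * of_real ((cmod a2)^2)) * \<alpha>)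
        / of_real (1 + (cmod a1)^2 + (cmod a2)^2)) * a1,
     (- ((\<alpha> * of_real ((cmod a1)^2) + \<beta> * of_real ((cmod a2)^2)) * \<delta> + (\<gamma> * of_real ((cmod a1)^2) + \<delta> * of_real ((cmod a2)^2)) * \<beta>)
        / of_real (1 + (cmod a1)^2 + (cmod a2)^2)) * a2)"
proof -
  define A where "A = (cmod a1)^2"
  define B where "B = (cmod a2)^2"
  have A0: "A \<ge> 0" "B \<ge> 0" by (simp_all add: A_def B_def)
  have N: "complex_of_real (1 + A + B) \<noteq> 0"
    using A0 by (metis add_nonneg_nonneg of_real_eq_0_iff add_pos_nonneg zero_less_one order_less_irrefl)
  have e1: "cnj a1 = of_real A / a1" using assms(1) unfolding A_def by (rule cnj_via_norm)
  have e2: "cnj a2 = of_real B / a2" using assms(2) unfolding B_def by (rule cnj_via_norm)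
  have N': "1 + (of_real A + of_real B) \<noteq> (0::complex)" using N by (simp add: add.assoc)
  show ?thesis
    unfolding Gam_def herm_def smul_def A_def[symmetric] B_def[symmetric]
    using assms N N'
    by (simp add: e1 e2 field_simps)
qed


definition m3 :: "real \<Rightarrow> real \<Rightarrow> real \<Rightarrow> real \<Rightarrow> real \<Rightarrow> real \<Rightarrow> real^3^3" where
  "m3 a11 a12 a13 a22 a23 a33 = (\<chi> i j. if i = 1 then (if j = 1 then a11 else if j = 2 then a12 else a13)
      else if i = 2 then (if j = 1 then a12 else if j = 2 then a22 else a23)
      else (if j = 1 then a13 else if j = 2 then a23 else a33))"

lemma m3_nth:
  "m3 a11 a12 a13 a22 a23 a33 $ 1 $ 1 = a11" "m3 a11 a12 a13 a22 a23 a33 $ 1 $ 2 = a12"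
  "m3 a11 a12 a13 a22 a23 a33 $ 1 $ 3 = a13" "m3 a11 a12 a13 a22 a23 a33 $ 2 $ 1 = a12"
  "m3 a11 a12 a13 a22 a23 a33 $ 2 $ 2 = a22" "m3 a11 a12 a13 a22 a23 a33 $ 2 $ 3 = a23"
  "m3 a11 a12 a13 a22 a23 a33 $ 3 $ 1 = a13" "m3 a11 a12 a13 a22 a23 a33 $ 3 $ 2 = a23"
  "m3 a11 a12 a13 a22 a23 a33 $ 3 $ 3 = a33"
  by (simp_all add: m3_def)

lemma matrix_inv_eq:
  fixes A M :: "real^3^3"
  assumes "A ** M = mat 1" "M ** A = mat 1"
  shows "matrix_inv A = M"
proof -
  have ex: "\<exists>A'. A ** A' = mat 1 \<and> A' ** A = mat 1" using assms by blast
  define A' where "A' = matrix_inv A"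
  have "A ** A' = mat 1 \<and> A' ** A = mat 1"
    unfolding A'_def matrix_inv_def by (rule someI_ex[OF ex])
  then have "A' = A' ** (A ** M)" and "A' ** A = mat 1" by (simp_all add: assms matrix_mul_rid)
  then have "A' = (A' ** A) ** M" by (simp add: matrix_mul_assoc)
  then show ?thesis using \<open>A' ** A = mat 1\<close> by (simp add: A'_def matrix_mul_lid)
qed

definition Dt :: "real \<Rightarrow> real \<Rightarrow> real \<Rightarrow> real \<Rightarrow> real \<Rightarrow> real" where
  "Dt P Q R u v = P * (u^2 + v^2) * (P * R - Q^2)"

definition Gm :: "real \<Rightarrow> real \<Rightarrow> real \<Rightarrow> real \<Rightarrow> real \<Rightarrow> real^3^3" where
  "Gm P Q R u v = m3 P 0 (u * Q) P (v * Q) ((u^2 + v^2) * R)"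
definition Mi :: "real \<Rightarrow> real \<Rightarrow> real \<Rightarrow> real \<Rightarrow> real \<Rightarrow> real^3^3" where "Mi P Q R u v = m3 ((P * (u^2+v^2) * R - v^2 * Q^2) / Dt P Q R u v) (u * v * Q^2 / Dt P Q R u v)
   (- u * Q * P / Dt P Q R u v) ((P * (u^2+v^2) * R - u^2 * Q^2) / Dt P Q R u v) (- v * Q * P / Dt P Q R u v) (P^2 / Dt P Q R u v)"

lemma Gm_inv:
  assumes "P \<noteq> 0" "u^2 + v^2 \<noteq> 0" "P * R - Q^2 \<noteq> 0"
  shows "matrix_inv (Gm P Q R u v) = Mi P Q R u v"
proof -
  have D: "Dt P Q R u v \<noteq> 0" using assms by (simp add: Dt_def)
  show ?thesis
  proof (rule matrix_inv_eq)
    show "Gm P Q R u v ** Mi P Q R u v = mat 1"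
      unfolding matrix_matrix_mult_def vec_eq_iff forall_3 sum_3 mat_def Gm_def Mi_def
      using D by (simp add: m3_nth field_simps, simp add: Dt_def algebra_simps power2_eq_square)
    show "Mi P Q R u v ** Gm P Q R u v = mat 1"
      unfolding matrix_matrix_mult_def vec_eq_iff forall_3 sum_3 mat_def Gm_def Mi_def
      using D by (simp add: m3_nth field_simps, simp add: Dt_def algebra_simps power2_eq_square)
  qed
qed


definition numF :: "real \<Rightarrow> real \<Rightarrow> real \<Rightarrow> real" where
  "numF lam A B = lam^4 * B^2 - lam * A^2 + lam * (1 - lam)^3 * A^2 * B^2"
definition ppF :: "real \<Rightarrow> real \<Rightarrow> real \<Rightarrow> real" where
  "ppF lam A B = A + lam^2 * B + (lam - 1)^2 * A * B"

definition Phi1 :: "real \<Rightarrow> real \<Rightarrow> real \<Rightarrow> real" where "Phi1 lam t e = (lam^4 * t^2 - lam + lam * (1 - lam)^3 * e^2) / (1 + lam^2 * t + (lam - 1)^2 * e)^2"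
definition Phi2 :: "real \<Rightarrow> real \<Rightarrow> real \<Rightarrow> real" where "Phi2 lam t e = (lam^4 - lam * t^2 + lam * (1 - lam)^3 * e^2) / (t + lam^2 + (lam - 1)^2 * e)^2"
definition Phi3 :: "real \<Rightarrow> real \<Rightarrow> real \<Rightarrow> real" where "Phi3 lam t e = (lam^4 * t^2 - lam * e^2 + lam * (1 - lam)^3) / (e + lam^2 * t + (lam - 1)^2)^2"

lemma ppF_pos: "A > 0 \<Longrightarrow> B > 0 \<Longrightarrow> ppF lam A B > 0"
  unfolding ppF_def by (intro add_pos_nonneg) auto

lemma Phi1_eq:
  assumes "A > 0" "B > 0" shows "numF lam A B / (ppF lam A B)^2 = Phi1 lam (B / A) B"
proof -
  have e1: "numF lam A B = A^2 * (lam^4 * (B/A)^2 - lam + lam * (1 - lam)^3 * B^2)"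
    unfolding numF_def using assms by (simp add: field_simps power2_eq_square)
  have e2: "ppF lam A B = A * (1 + lam^2 * (B/A) + (lam - 1)^2 * B)"
    unfolding ppF_def using assms by (simp add: field_simps power2_eq_square)
  show ?thesis unfolding e1 e2 Phi1_def using assms by (simp add: power_mult_distrib)
qed
lemma Phi2_eq:
  assumes "A > 0" "B > 0" shows "numF lam A B / (ppF lam A B)^2 = Phi2 lam (A / B) A"
proof -
  have e1: "numF lam A B = B^2 * (lam^4 - lam * (A/B)^2 + lam * (1 - lam)^3 * A^2)"
    unfolding numF_def using assms by (simp add: field_simps power2_eq_square)
  have e2: "ppF lam A B = B * (A/B + lam^2 + (lam - 1)^2 * A)"
    unfolding ppF_def using assms by (simp add: field_simps power2_eq_square)
  show ?thesis unfolding e1 e2 Phi2_def using assms by (simp add: power_mult_distrib)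
qed
lemma Phi3_eq:
  assumes "A > 0" "B > 0" shows "numF lam A B / (ppF lam A B)^2 = Phi3 lam (1 / A) (1 / B)"
proof -
  have e1: "numF lam A B = (A*B)^2 * (lam^4 * (1/A)^2 - lam * (1/B)^2 + lam * (1 - lam)^3)"
    unfolding numF_def using assms by (simp add: field_simps power2_eq_square)
  have e2: "ppF lam A B = (A*B) * (1/B + lam^2 * (1/A) + (lam - 1)^2)"
    unfolding ppF_def using assms by (simp add: field_simps power2_eq_square)
  show ?thesis unfolding e1 e2 Phi3_def using assms by (simp add: power_mult_distrib)
qed

lemma Phi1_lim:
  assumes "(f \<longlongrightarrow> 0) F" "(g \<longlongrightarrow> 0) F"
  shows "((\<lambda>s. Phi1 lam (f s) (g s)) \<longlongrightarrow> - lam) F"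
proof -
  have "((\<lambda>s. Phi1 lam (f s) (g s)) \<longlongrightarrow> Phi1 lam 0 0) F"
    unfolding Phi1_def
    apply (rule tendsto_divide)
    apply (rule tendsto_intros assms)+
    apply simp
    done
  then show ?thesis by (simp add: Phi1_def)
qed
lemma Phi2_lim:
  assumes "(f \<longlongrightarrow> 0) F" "(g \<longlongrightarrow> 0) F" "lam \<noteq> 0"
  shows "((\<lambda>s. Phi2 lam (f s) (g s)) \<longlongrightarrow> 1) F"
proof -
  have "((\<lambda>s. Phi2 lam (f s) (g s)) \<longlongrightarrow> Phi2 lam 0 0) F"
    unfolding Phi2_def
    apply (rule tendsto_divide)
    apply (rule tendsto_intros assms)+
    using assms(3) apply simp
    done
  moreover have "Phi2 lam 0 0 = 1"
  proof -
    have "(lam^2)^2 = lam^4" by (simp flip: power_mult)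
    then show ?thesis using assms(3) by (simp add: Phi2_def)
  qed
  ultimately show ?thesis by simp
qed
lemma Phi3_lim:
  assumes "(f \<longlongrightarrow> 0) F" "(g \<longlongrightarrow> 0) F" "lam \<noteq> 1"
  shows "((\<lambda>s. Phi3 lam (f s) (g s)) \<longlongrightarrow> - lam / (lam - 1)) F"
proof -
  have "((\<lambda>s. Phi3 lam (f s) (g s)) \<longlongrightarrow> Phi3 lam 0 0) F"
    unfolding Phi3_def
    apply (rule tendsto_divide)
    apply (rule tendsto_intros assms)+
    using assms(3) apply simp
    done
  moreover have "Phi3 lam 0 0 = - lam / (lam - 1)"
  proof -
    have e1: "(1 - lam)^3 = - ((lam - 1)^3)" by (simp add: power3_eq_cube algebra_simps)
    have e2: "((lam - 1)^2)^2 = (lam - 1)^3 * (lam - 1)" by (simp add: power3_eq_cube power2_eq_square)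
    have ne: "lam - 1 \<noteq> 0" "(lam - 1)^3 \<noteq> 0" using assms(3) by auto
    have aux: "\<And>y::real. y \<noteq> 0 \<Longrightarrow> lam * (- (y^3)) / ((y^2)^2) = - lam / y"
      by (simp add: field_simps power2_eq_square power3_eq_cube)
    have "Phi3 lam 0 0 = lam * (- ((lam - 1)^3)) / (((lam - 1)^2)^2)"
      unfolding Phi3_def e1 by simp
    then show ?thesis using aux[OF ne(1)] by simp
  qed
  ultimately show ?thesis by simp
qed

abbreviation "AA x0 s \<equiv> exp (2 * s + 2 * x0)"
abbreviation "BB lam s \<equiv> exp (2 * lam * s)"

lemma const_lim:
  assumes "\<forall>s. numF lam (AA x0 s) (BB lam s) = C * (ppF lam (AA x0 s) (BB lam s))^2"
    and "((\<lambda>s. numF lam (AA x0 s) (BB lam s) / (ppF lam (AA x0 s) (BB lam s))^2) \<longlongrightarrow> L) F" "F \<noteq> bot"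
  shows "C = L"
proof -
  have "numF lam (AA x0 s) (BB lam s) / (ppF lam (AA x0 s) (BB lam s))^2 = C" for s
    using assms(1) ppF_pos[of "AA x0 s" "BB lam s" lam] by simp
  then have "((\<lambda>s. C) \<longlongrightarrow> L) F" using assms(2) by simp
  then show ?thesis using assms(3) tendsto_const_iff by blast
qed

lemma lim_case1: "lam > 1 \<Longrightarrow> ((\<lambda>s. numF lam (AA x0 s) (BB lam s) / (ppF lam (AA x0 s) (BB lam s))^2) \<longlongrightarrow> - lam) at_bot"
  unfolding Phi1_eq[OF exp_gt_zero exp_gt_zero] by (rule Phi1_lim; real_asymp)
lemma lim_case4: "lam < 0 \<Longrightarrow> ((\<lambda>s. numF lam (AA x0 s) (BB lam s) / (ppF lam (AA x0 s) (BB lam s))^2) \<longlongrightarrow> - lam) at_top"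
  unfolding Phi1_eq[OF exp_gt_zero exp_gt_zero] by (rule Phi1_lim; real_asymp)
lemma lim_case3: "lam < 1 \<Longrightarrow> lam \<noteq> 0 \<Longrightarrow> ((\<lambda>s. numF lam (AA x0 s) (BB lam s) / (ppF lam (AA x0 s) (BB lam s))^2) \<longlongrightarrow> 1) at_bot"
  unfolding Phi2_eq[OF exp_gt_zero exp_gt_zero] by (rule Phi2_lim; real_asymp?)
lemma lim_case2: "lam > 0 \<Longrightarrow> lam \<noteq> 1 \<Longrightarrow> ((\<lambda>s. numF lam (AA x0 s) (BB lam s) / (ppF lam (AA x0 s) (BB lam s))^2) \<longlongrightarrow> - lam / (lam - 1)) at_top"
  unfolding Phi3_eq[OF exp_gt_zero exp_gt_zero] by (rule Phi3_lim; real_asymp?)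

lemma p4: "(lam::real)^4 = lam*lam*lam*lam" by (simp add: eval_nat_numeral)

lemma sign1:
  assumes "A > 0" "B > 0" "lam \<ge> 2"
  shows "numF lam A B + lam * (ppF lam A B)^2 > 0"
proof -
  have id: "numF lam A B + lam * (ppF lam A B)^2 = (1+lam)*lam^4*B^2 + lam*(lam-1)^3*(lam-2)*A^2*B^2
      + 2*lam^3*A*B + 2*lam*(lam-1)^2*A^2*B + 2*lam^3*(lam-1)^2*A*B^2"
    unfolding numF_def ppF_def by (simp add: power2_eq_square power3_eq_cube p4 algebra_simps)
  have l: "lam > 0" "lam - 1 > 0" "lam - 2 \<ge> 0" using assms by auto
  have t1: "(1+lam)*lam^4*B^2 \<ge> 0" using l by simp
  have t2: "lam*(lam-1)^3*(lam-2)*A^2*B^2 \<ge> 0" using l by simp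
  have t3: "2*lam^3*A*B > 0" using l assms by simp
  have t4: "2*lam*(lam-1)^2*A^2*B \<ge> 0" using l assms by simp
  have t5: "2*lam^3*(lam-1)^2*A*B^2 \<ge> 0" using l assms by simp
  show ?thesis unfolding id using t1 t2 t3 t4 t5 by linarith
qed

lemma sign4:
  assumes "A > 0" "B > 0" "lam \<le> -1"
  shows "numF lam A B + lam * (ppF lam A B)^2 < 0"
proof -
  have id: "numF lam A B + lam * (ppF lam A B)^2 = (1+lam)*lam^4*B^2 + lam*(lam-1)^3*(lam-2)*A^2*B^2
      + 2*lam^3*A*B + 2*lam*(lam-1)^2*A^2*B + 2*lam^3*(lam-1)^2*A*B^2"
    unfolding numF_def ppF_def by (simp add: power2_eq_square power3_eq_cube p4 algebra_simps)
  have l: "lam < 0" "lam - 1 < 0" "lam - 2 < 0" "1 + lam \<le> 0" using assms by auto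
  have c3: "lam^3 < 0" using l by (simp add: power3_eq_cube mult_neg_pos mult_pos_neg zero_less_mult_iff mult_less_0_iff)
  have c2: "(lam-1)^2 > 0" using l by simp
  have c33: "(lam-1)^3 < 0" using l by (simp add: power3_eq_cube mult_less_0_iff zero_less_mult_iff)
  have t1: "(1+lam)*lam^4*B^2 \<le> 0" using l by (simp add: mult_nonpos_nonneg)
  have t2: "lam*(lam-1)^3*(lam-2)*A^2*B^2 < 0"
  proof -
    have "lam*(lam-1)^3 > 0" using l c33 by (simp add: zero_less_mult_iff)
    then have "lam*(lam-1)^3*(lam-2) < 0" using l by (simp add: mult_less_0_iff)
    then show ?thesis using assms by (simp add: mult_less_0_iff)
  qed
  have t3: "2*lam^3*A*B < 0" using c3 assms by (simp add: mult_less_0_iff)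
  have t4: "2*lam*(lam-1)^2*A^2*B < 0" using l c2 assms by (simp add: mult_less_0_iff)
  have t5: "2*lam^3*(lam-1)^2*A*B^2 < 0" using c3 c2 assms by (simp add: mult_less_0_iff)
  show ?thesis unfolding id using t1 t2 t3 t4 t5 by linarith
qed

lemma sign3:
  assumes "A > 0" "B > 0" "lam > 1/2" "lam < 2"
  shows "(lam - 1) * numF lam A B + lam * (ppF lam A B)^2 > 0"
proof -
  have id: "(lam - 1) * numF lam A B + lam * (ppF lam A B)^2 = (2*lam-1)*lam^4*B^2 + lam*(2-lam)*A^2
      + 2*lam^3*A*B + 2*lam*(lam-1)^2*A^2*B + 2*lam^3*(lam-1)^2*A*B^2"
    unfolding numF_def ppF_def by (simp add: power2_eq_square power3_eq_cube p4 algebra_simps)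
  have l: "lam > 0" "2*lam - 1 > 0" "2 - lam > 0" using assms by auto
  have t1: "(2*lam-1)*lam^4*B^2 > 0" using l assms by simp
  have t2: "lam*(2-lam)*A^2 > 0" using l assms by simp
  have t3: "2*lam^3*A*B > 0" using l assms by simp
  have t4: "2*lam*(lam-1)^2*A^2*B \<ge> 0" using l assms by simp
  have t5: "2*lam^3*(lam-1)^2*A*B^2 \<ge> 0" using l assms by simp
  show ?thesis unfolding id using t1 t2 t3 t4 t5 by linarith
qed

lemma sign2:
  assumes "A > 0" "B > 0" "lam > -1" "lam \<le> 1/2" "lam \<noteq> 0"
  shows "numF lam A B - (ppF lam A B)^2 < 0"
proof -
  have id: "numF lam A B - (ppF lam A B)^2 = - ((lam+1)*A^2 + (lam-1)^3*(2*lam-1)*A^2*B^2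
      + 2*lam^2*A*B + 2*(lam-1)^2*A^2*B + 2*lam^2*(lam-1)^2*A*B^2)"
    unfolding numF_def ppF_def by (simp add: power2_eq_square power3_eq_cube p4 algebra_simps)
  have l: "lam + 1 > 0" "lam - 1 < 0" "2*lam - 1 \<le> 0" using assms by auto
  have c33: "(lam-1)^3 < 0" using l by (simp add: power3_eq_cube mult_less_0_iff zero_less_mult_iff)
  have t1: "(lam+1)*A^2 > 0" using l assms by simp
  have t2: "(lam-1)^3*(2*lam-1)*A^2*B^2 \<ge> 0"
  proof -
    have "(lam-1)^3*(2*lam-1) \<ge> 0" using c33 l by (simp add: zero_le_mult_iff)
    then show ?thesis by simp
  qed
  have t3: "2*lam^2*A*B > 0" using assms by simp
  have t4: "2*(lam-1)^2*A^2*B \<ge> 0" using assms by simp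
  have t5: "2*lam^2*(lam-1)^2*A*B^2 \<ge> 0" using assms by simp
  show ?thesis unfolding id using t1 t2 t3 t4 t5 by linarith
qed

lemma F_nonconst:
  assumes "lam \<noteq> 0" "lam \<noteq> 1"
  shows "\<not> (\<forall>s. numF lam (AA x0 s) (BB lam s) = C * (ppF lam (AA x0 s) (BB lam s))^2)"
proof
  assume H: "\<forall>s. numF lam (AA x0 s) (BB lam s) = C * (ppF lam (AA x0 s) (BB lam s))^2"
  define A0 where "A0 = AA x0 0"
  define B0 where "B0 = BB lam 0"
  have A0: "A0 > 0" "B0 > 0" by (simp_all add: A0_def B0_def)
  have H0: "numF lam A0 B0 = C * (ppF lam A0 B0)^2" using H[rule_format, of 0] by (simp add: A0_def B0_def)
  consider "lam \<ge> 2" | "lam > 1/2 \<and> lam < 2" | "lam > -1 \<and> lam \<le> 1/2" | "lam \<le> -1" by linarith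
  then show False
  proof cases
    case 1
    have "C = - lam" using const_lim[OF H lim_case1] 1 by simp
    then show False using sign1[OF A0 1] H0 by simp
  next
    case 2
    have "C = - lam / (lam - 1)" using const_lim[OF H lim_case2] 2 assms by simp
    moreover have "lam - 1 \<noteq> 0" using assms by simp
    ultimately have Cl: "(lam - 1) * C + lam = 0" by (simp add: field_simps)
    have "(lam - 1) * numF lam A0 B0 + lam * (ppF lam A0 B0)^2 = ((lam - 1) * C + lam) * (ppF lam A0 B0)^2"
      using H0 by (simp add: algebra_simps)
    then have "(lam - 1) * numF lam A0 B0 + lam * (ppF lam A0 B0)^2 = 0" using Cl by simp
    then show False using sign3[of A0 B0 lam] A0 2 by simp
  next
    case 3
    have "C = 1" using const_lim[OF H lim_case3] 3 assms by simp
    then show False using sign2[of A0 B0 lam] A0 3 assms H0 by simp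
  next
    case 4
    have "C = - lam" using const_lim[OF H lim_case4] 4 by simp
    then show False using sign4[OF A0 4] H0 by simp
  qed
qed


lemma beta_alg:
  fixes A B lam N :: real
  assumes N: "N = 1 + A + B" and N0: "N \<noteq> 0"
  shows "(A * (1 + B - lam * B) / N^2)^2 * (1 - lam) - 2 * (A * (1 + B - lam * B) / N^2) * (ppF lam A B / N^2) * (1 + B - lam * B) / N
     + (ppF lam A B / N^2)^2 * (1 + B - A) / N = numF lam A B / N^4"
proof -
  have "(A * (1 + B - lam * B) / N^2)^2 * (1 - lam) - 2 * (A * (1 + B - lam * B) / N^2) * (ppF lam A B / N^2) * (1 + B - lam * B) / N
     + (ppF lam A B / N^2)^2 * (1 + B - A) / N
     = ((A * (1 + B - lam * B))^2 * (1 - lam) * N - 2 * (A * (1 + B - lam * B)) * ppF lam A B * (1 + B - lam * B)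
     + (ppF lam A B)^2 * (1 + B - A)) / N^5"
    using N0 by (simp add: field_simps eval_nat_numeral)
  also have "(A * (1 + B - lam * B))^2 * (1 - lam) * N - 2 * (A * (1 + B - lam * B)) * ppF lam A B * (1 + B - lam * B)
     + (ppF lam A B)^2 * (1 + B - A) = N * numF lam A B"
    unfolding N ppF_def numF_def by (simp add: power2_eq_square power3_eq_cube p4 algebra_simps)
  also have "N * numF lam A B / N^5 = numF lam A B / N^4"
    using N0 by (simp add: eval_nat_numeral)
  finally show ?thesis .
qed

lemma hh_cnj: "cnj (hh z u v) = hh z v u"
  unfolding hh_def by (simp add: herm_cnj cnj_one_herm mult.commute)
lemma FS_sym: "FS z u v = FS z v u"
  unfolding FS_hh by (subst hh_cnj[symmetric]) simp

lemma Gf_lin: "Gf A B \<alpha> \<beta> \<gamma> \<delta> =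
   \<alpha> * ((of_real (A*(1+B)) * cnj \<gamma> - of_real (A*B) * cnj \<delta>) / of_real ((1+A+B)^2))
 + \<beta> * ((of_real (B*(1+A)) * cnj \<delta> - of_real (A*B) * cnj \<gamma>) / of_real ((1+A+B)^2))"
  unfolding Gf_def
  by (cases "complex_of_real ((1+A+B)^2) = 0") (simp_all add: field_simps del: of_real_power)

context
  fixes I :: "real set" and lam :: real and x y :: "real \<Rightarrow> real" and p :: "real^3"
  assumes lam0: "lam \<noteq> 0" and oI: "open I" and pI: "p$3 \<in> I"
    and dx: "\<And>r. r \<in> I \<Longrightarrow> (x has_real_derivative deriv x r) (at r)"
    and dy: "\<And>r. r \<in> I \<Longrightarrow> (y has_real_derivative deriv y r) (at r)"
    and nz: "(deriv x (p$3), deriv y (p$3)) \<noteq> (0, 0)"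
    and ddx: "(deriv x has_real_derivative deriv (deriv x) (p$3)) (at (p$3))"
    and ddy: "(deriv y has_real_derivative deriv (deriv y) (p$3)) (at (p$3))"
begin

definition "a1 = Z1 x y p"
definition "a2 = Z2 lam p"
definition "A = (cmod a1)^2"
definition "B = (cmod a2)^2"
definition "NN = 1 + A + B"
definition "u = deriv x (p$3)"
definition "v = deriv y (p$3)"
definition "c = cc x y (p$3)"
definition "d = dd x y (p$3)"
definition "P = (A + lam^2 * B + (lam - 1)^2 * A * B) / NN^2"
definition "Q = A * (1 + B - lam * B) / NN^2"
definition "R = A * (1 + B) / NN^2"

lemma a_nz: "a1 \<noteq> 0" "a2 \<noteq> 0"
  by (simp_all add: a1_def a2_def Z1_def Z2_def)
lemma AB_pos: "A > 0" "B > 0"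
  using a_nz by (simp_all add: A_def B_def)
lemma NN_pos: "NN > 0"
  using AB_pos by (simp add: NN_def)
lemma c_eq: "c = Complex u v"
  by (simp add: c_def cc_def u_def v_def)
lemma uv_pos: "u^2 + v^2 > 0"
  using nz unfolding u_def[symmetric] v_def[symmetric]
  by (metis add_pos_nonneg add_nonneg_pos power2_less_0 not_less prod.inject zero_less_power2 sum_power2_eq_zero_iff)

lemma sig: "sigma lam x y p = (a1, a2)"
  by (simp add: sigma_alt a1_def a2_def)

lemma pdv1: "pd 1 (sigma lam x y) p = (1 * a1, of_real lam * a2)"
  by (simp add: pd1 a1_def a2_def)
lemma pdv2: "pd 2 (sigma lam x y) p = (\<i> * a1, (\<i> * of_real lam) * a2)"
  by (simp add: pd2 a1_def a2_def)
lemma pdv3: "pd 3 (sigma lam x y) p = (c * a1, 0 * a2)"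
  by (simp add: pd3 dx dy pI a1_def c_def)

lemma FSv: "FS (a1, a2) (\<alpha> * a1, \<beta> * a2) (\<gamma> * a1, \<delta> * a2) = Re (Gf A B \<alpha> \<beta> \<gamma> \<delta>)"
  by (simp add: FS_hh hh_vec a_nz A_def B_def)

lemma P_eq: "Re (Gf A B 1 (of_real lam) 1 (of_real lam)) = P"
  unfolding Gf_def P_def NN_def by (simp add: field_simps power2_eq_square)

lemma metric: "ind_metric (sigma lam x y) p = Gm P Q R u v"
  unfolding ind_metric_def vec_eq_iff forall_3 Gm_def
  apply (simp only: vec_lambda_beta m3_nth sig pdv1 pdv2 pdv3 FSv)
  by (simp add: c_eq Gf_def P_def Q_def R_def NN_def field_simps power2_eq_square)

lemma P_pos: "P > 0"
  unfolding P_def using AB_pos NN_pos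
  by (intro divide_pos_pos add_pos_nonneg) (auto intro!: add_pos_nonneg mult_nonneg_nonneg)

lemma PRQ: "P * R - Q^2 = lam^2 * A * B / NN^3"
proof -
  have N0: "NN \<noteq> 0" using NN_pos by simp
  show ?thesis
    unfolding P_def Q_def R_def using N0
    by (simp add: field_simps power2_eq_square power3_eq_cube, simp add: NN_def algebra_simps)
qed

lemma PRQ_pos: "P * R - Q^2 > 0"
  unfolding PRQ using AB_pos NN_pos lam0 by simp

lemma minv: "matrix_inv (ind_metric (sigma lam x y) p) = Mi P Q R u v"
  unfolding metric using P_pos uv_pos PRQ_pos by (intro Gm_inv) auto

definition "K1 n = (of_real (A*(1+B)) * cnj (fst n / a1) - of_real (A*B) * cnj (snd n / a2)) / of_real (NN^2)"
definition "K2 n = (of_real (B*(1+A)) * cnj (snd n / a2) - of_real (A*B) * cnj (fst n / a1)) / of_real (NN^2)"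

lemma FSn: "FS (a1, a2) (\<alpha> * a1, \<beta> * a2) n = Re (\<alpha> * K1 n + \<beta> * K2 n)"
proof -
  have "n = (fst n / a1 * a1, snd n / a2 * a2)" using a_nz by simp
  then have "FS (a1, a2) (\<alpha> * a1, \<beta> * a2) n = FS (a1, a2) (\<alpha> * a1, \<beta> * a2) (fst n / a1 * a1, snd n / a2 * a2)"
    by simp
  also have "\<dots> = Re (\<alpha> * K1 n + \<beta> * K2 n)"
    unfolding FSv Gf_lin K1_def K2_def NN_def ..
  finally show ?thesis .
qed

lemma sff_gen:
  assumes "pd a (sigma lam x y) p = (\<alpha> * a1, \<beta> * a2)" "pd b (sigma lam x y) p = (\<gamma> * a1, \<delta> * a2)"
    "pd a (pd b (sigma lam x y)) p = (\<epsilon> * a1, \<eta> * a2)"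
  shows "second_ff (sigma lam x y) p n a b =
    Re ((\<epsilon> - ((\<alpha> * of_real A + \<beta> * of_real B) * \<gamma> + (\<gamma> * of_real A + \<delta> * of_real B) * \<alpha>) / of_real NN) * K1 n
      + (\<eta> - ((\<alpha> * of_real A + \<beta> * of_real B) * \<delta> + (\<gamma> * of_real A + \<delta> * of_real B) * \<beta>) / of_real NN) * K2 n)"
proof -
  have "second_ff (sigma lam x y) p n a b = FS (a1, a2) (\<epsilon> * a1, \<eta> * a2) n + FS (a1, a2) (Gam (a1, a2) (\<alpha> * a1, \<beta> * a2) (\<gamma> * a1, \<delta> * a2)) n"
    unfolding second_ff_def sig assms dFS_eq koszul ..
  also have "\<dots> = Re (\<epsilon> * K1 n + \<eta> * K2 n) + Re ((- ((\<alpha> * of_real A + \<beta> * of_real B) * \<gamma> + (\<gamma> * of_real A + \<delta> * of_real B) * \<alpha>) / of_real NN) * K1 n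
      + (- ((\<alpha> * of_real A + \<beta> * of_real B) * \<delta> + (\<gamma> * of_real A + \<delta> * of_real B) * \<beta>) / of_real NN) * K2 n)"
    unfolding Gam_vec[OF a_nz] FSn A_def[symmetric] B_def[symmetric] NN_def by simp
  also have "\<dots> = Re ((\<epsilon> - ((\<alpha> * of_real A + \<beta> * of_real B) * \<gamma> + (\<gamma> * of_real A + \<delta> * of_real B) * \<alpha>) / of_real NN) * K1 n
      + (\<eta> - ((\<alpha> * of_real A + \<beta> * of_real B) * \<delta> + (\<gamma> * of_real A + \<delta> * of_real B) * \<beta>) / of_real NN) * K2 n)"
    by (subst plus_complex.sel(1)[symmetric], rule arg_cong[where f=Re], use NN_pos in \<open>simp add: field_simps\<close>)
  finally show ?thesis .
qed

lemma pdd11: "pd 1 (pd 1 (sigma lam x y)) p = (1 * a1, (of_real lam * of_real lam) * a2)"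
  by (simp add: pd11 a1_def a2_def c_def d_def algebra_simps)
lemma pdd21: "pd 2 (pd 1 (sigma lam x y)) p = (\<i> * a1, (\<i> * of_real lam * of_real lam) * a2)"
  by (simp add: pd21 a1_def a2_def c_def d_def algebra_simps)
lemma pdd12: "pd 1 (pd 2 (sigma lam x y)) p = (\<i> * a1, (\<i> * of_real lam * of_real lam) * a2)"
  by (simp add: pd12 a1_def a2_def c_def d_def algebra_simps)
lemma pdd22: "pd 2 (pd 2 (sigma lam x y)) p = ((-1) * a1, (- (of_real lam * of_real lam)) * a2)"
  by (simp add: pd22 a1_def a2_def c_def d_def algebra_simps)
lemma pdd31: "pd 3 (pd 1 (sigma lam x y)) p = (c * a1, 0 * a2)"
  by (simp add: pd31[OF oI pI dx dy] a1_def a2_def c_def d_def algebra_simps)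
lemma pdd32: "pd 3 (pd 2 (sigma lam x y)) p = ((\<i> * c) * a1, 0 * a2)"
  by (simp add: pd32[OF oI pI dx dy] a1_def a2_def c_def d_def algebra_simps)
lemma pdd13: "pd 1 (pd 3 (sigma lam x y)) p = (c * a1, 0 * a2)"
  by (simp add: pd13[OF oI pI dx dy] a1_def a2_def c_def d_def algebra_simps)
lemma pdd23: "pd 2 (pd 3 (sigma lam x y)) p = ((\<i> * c) * a1, 0 * a2)"
  by (simp add: pd23[OF oI pI dx dy] a1_def a2_def c_def d_def algebra_simps)
lemma pdd33: "pd 3 (pd 3 (sigma lam x y)) p = ((c * c + d) * a1, 0 * a2)"
  by (simp add: pd33[OF oI pI dx dy ddx ddy] a1_def a2_def c_def d_def algebra_simps)

definition "s = A + lam * B"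
definition "E1 = 1 - 2 * s / NN"
definition "E2 = lam^2 - 2 * s * lam / NN"
definition "S1 = 1 - (s + A) / NN"
definition "S2 = - lam * A / NN"
definition "R1 = c * c + d - 2 * c * c * of_real A / of_real NN"

lemma N0: "complex_of_real NN \<noteq> 0" "NN \<noteq> 0" using NN_pos by auto
lemma sff11: "second_ff (sigma lam x y) p n 1 1 = Re (of_real E1 * K1 n + of_real E2 * K2 n)"
  unfolding sff_gen[OF pdv1 pdv1 pdd11]
  by (rule arg_cong[where f=Re], use N0 in \<open>simp add: E1_def E2_def S1_def S2_def R1_def s_def field_simps power2_eq_square\<close>)
lemma sff12: "second_ff (sigma lam x y) p n 1 2 = Re (\<i> * of_real E1 * K1 n + \<i> * of_real E2 * K2 n)"
  unfolding sff_gen[OF pdv1 pdv2 pdd12]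
  by (rule arg_cong[where f=Re], use N0 in \<open>simp add: E1_def E2_def S1_def S2_def R1_def s_def field_simps power2_eq_square\<close>)
lemma sff21: "second_ff (sigma lam x y) p n 2 1 = Re (\<i> * of_real E1 * K1 n + \<i> * of_real E2 * K2 n)"
  unfolding sff_gen[OF pdv2 pdv1 pdd21]
  by (rule arg_cong[where f=Re], use N0 in \<open>simp add: E1_def E2_def S1_def S2_def R1_def s_def field_simps power2_eq_square\<close>)
lemma sff22: "second_ff (sigma lam x y) p n 2 2 = Re (- of_real E1 * K1 n - of_real E2 * K2 n)"
  unfolding sff_gen[OF pdv2 pdv2 pdd22]
  by (rule arg_cong[where f=Re], use N0 in \<open>simp add: E1_def E2_def S1_def S2_def R1_def s_def field_simps power2_eq_square\<close>)
lemma sff13: "second_ff (sigma lam x y) p n 1 3 = Re (c * of_real S1 * K1 n + c * of_real S2 * K2 n)"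
  unfolding sff_gen[OF pdv1 pdv3 pdd13]
  by (rule arg_cong[where f=Re], use N0 in \<open>simp add: E1_def E2_def S1_def S2_def R1_def s_def field_simps power2_eq_square\<close>)
lemma sff31: "second_ff (sigma lam x y) p n 3 1 = Re (c * of_real S1 * K1 n + c * of_real S2 * K2 n)"
  unfolding sff_gen[OF pdv3 pdv1 pdd31]
  by (rule arg_cong[where f=Re], use N0 in \<open>simp add: E1_def E2_def S1_def S2_def R1_def s_def field_simps power2_eq_square\<close>)
lemma sff23: "second_ff (sigma lam x y) p n 2 3 = Re (\<i> * c * of_real S1 * K1 n + \<i> * c * of_real S2 * K2 n)"
  unfolding sff_gen[OF pdv2 pdv3 pdd23]
  by (rule arg_cong[where f=Re], use N0 in \<open>simp add: E1_def E2_def S1_def S2_def R1_def s_def field_simps power2_eq_square\<close>)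
lemma sff32: "second_ff (sigma lam x y) p n 3 2 = Re (\<i> * c * of_real S1 * K1 n + \<i> * c * of_real S2 * K2 n)"
  unfolding sff_gen[OF pdv3 pdv2 pdd32]
  by (rule arg_cong[where f=Re], use N0 in \<open>simp add: E1_def E2_def S1_def S2_def R1_def s_def field_simps power2_eq_square\<close>)
lemma sff33: "second_ff (sigma lam x y) p n 3 3 = Re (R1 * K1 n)"
  unfolding sff_gen[OF pdv3 pdv3 pdd33]
  by (rule arg_cong[where f=Re], use N0 in \<open>simp add: E1_def E2_def S1_def S2_def R1_def s_def field_simps power2_eq_square\<close>)

definition "DD = Dt P Q R u v"
definition "H1 = (c * c * of_real (Q^2) * of_real E1 - 2 * of_real (Q * P) * c * c * of_real S1 + of_real (P^2) * R1) / of_real DD"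
definition "H2 = (c * c * of_real (Q^2) * of_real E2 - 2 * of_real (Q * P) * c * c * of_real S2) / of_real DD"

lemma DD_pos: "DD > 0"
  unfolding DD_def Dt_def using P_pos uv_pos PRQ_pos by simp

lemma Re_ofr: "r * Re z = Re (of_real r * z)" by simp

lemma mean_formula: "mean_curv (sigma lam x y) p n = Re (H1 * K1 n + H2 * K2 n)"
proof -
  define m11 where "m11 = (P * (u^2 + v^2) * R - v^2 * Q^2) / DD"
  define m12 where "m12 = u * v * Q^2 / DD"
  define m13 where "m13 = - u * Q * P / DD"
  define m22 where "m22 = (P * (u^2 + v^2) * R - u^2 * Q^2) / DD"
  define m23 where "m23 = - v * Q * P / DD"
  define m33 where "m33 = P^2 / DD"
  have D0: "DD \<noteq> 0" "complex_of_real DD \<noteq> 0" using DD_pos by auto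
  have mc: "mean_curv (sigma lam x y) p n =
     m11 * Re (of_real E1 * K1 n + of_real E2 * K2 n) + m12 * Re (\<i> * of_real E1 * K1 n + \<i> * of_real E2 * K2 n)
   + m13 * Re (c * of_real S1 * K1 n + c * of_real S2 * K2 n)
   + (m12 * Re (\<i> * of_real E1 * K1 n + \<i> * of_real E2 * K2 n) + m22 * Re (- of_real E1 * K1 n - of_real E2 * K2 n)
   + m23 * Re (\<i> * c * of_real S1 * K1 n + \<i> * c * of_real S2 * K2 n))
   + (m13 * Re (c * of_real S1 * K1 n + c * of_real S2 * K2 n) + m23 * Re (\<i> * c * of_real S1 * K1 n + \<i> * c * of_real S2 * K2 n)
   + m33 * Re (R1 * K1 n))"
    unfolding mean_curv_def minv sum_3 Mi_def m3_nth sff11 sff12 sff13 sff21 sff22 sff23 sff31 sff32 sff33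
      m11_def m12_def m13_def m22_def m23_def m33_def DD_def
    by (simp only: mult.assoc add.assoc)
  also have "\<dots> = Re ((of_real m11 - of_real m22 + 2 * \<i> * of_real m12) * (of_real E1 * K1 n + of_real E2 * K2 n)
      + 2 * (of_real m13 + \<i> * of_real m23) * c * (of_real S1 * K1 n + of_real S2 * K2 n) + of_real m33 * R1 * K1 n)"
    unfolding Re_ofr by (simp only: plus_complex.sel(1)[symmetric], rule arg_cong[where f=Re], simp add: algebra_simps)
  also have "of_real m11 - of_real m22 + 2 * \<i> * of_real m12 = c * c * of_real (Q^2) / of_real DD"
    unfolding m11_def m22_def m12_def c_eq using D0
    by (simp add: complex_eq_iff field_simps power2_eq_square)
  also have "of_real m13 + \<i> * of_real m23 = - (of_real (Q * P) * c) / of_real DD"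
    unfolding m13_def m23_def c_eq using D0
    by (simp add: complex_eq_iff field_simps power2_eq_square)
  also have "Re (c * c * of_real (Q^2) / of_real DD * (of_real E1 * K1 n + of_real E2 * K2 n)
      + 2 * (- (of_real (Q * P) * c) / of_real DD) * c * (of_real S1 * K1 n + of_real S2 * K2 n) + of_real m33 * R1 * K1 n)
     = Re (H1 * K1 n + H2 * K2 n)"
    unfolding H1_def H2_def m33_def using D0
    by (rule_tac arg_cong[where f=Re], simp add: field_simps)
  finally show ?thesis .
qed

definition "beta = Q^2 * (1 - lam) - 2 * Q * P * (1 + B - lam * B) / NN + P^2 * (1 + B - A) / NN"
definition "nu = (c * c * of_real beta + d * of_real (P^2)) / of_real DD"

lemma H_split: "H1 * K1 n + H2 * K2 n = (H2 / of_real lam) * (K1 n + of_real lam * K2 n) + nu * K1 n"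
proof -
  have D0: "DD \<noteq> 0" "complex_of_real DD \<noteq> 0" using DD_pos by auto
  have "H1 - H2 / of_real lam = nu"
    unfolding H1_def H2_def nu_def beta_def E1_def E2_def S1_def S2_def R1_def s_def using D0 N0 lam0
    by (simp add: field_simps power2_eq_square, simp add: NN_def algebra_simps)
  then have h: "H1 = H2 / of_real lam + nu"
  proof -
    assume e: "H1 - H2 / of_real lam = nu"
    have "H1 = (H1 - H2 / of_real lam) + H2 / of_real lam" by simp
    then show ?thesis unfolding e by (simp add: add.commute)
  qed
  show ?thesis using lam0 unfolding h by (simp add: field_simps)
qed

lemma normal1: "FS (sigma lam x y p) (pd 1 (sigma lam x y) p) n = Re (K1 n + of_real lam * K2 n)"
  unfolding sig pdv1 FSn by simp
lemma normal2: "FS (sigma lam x y p) (pd 2 (sigma lam x y) p) n = Re (\<i> * (K1 n + of_real lam * K2 n))"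
  unfolding sig pdv2 FSn by (simp add: algebra_simps)
lemma normal3: "FS (sigma lam x y p) (pd 3 (sigma lam x y) p) n = Re (c * K1 n)"
  unfolding sig pdv3 FSn by simp

lemma mean_split: "mean_curv (sigma lam x y) p n = Re ((H2 / of_real lam) * (K1 n + of_real lam * K2 n)) + Re (nu * K1 n)"
  unfolding mean_formula H_split by simp

definition "u2 = deriv (deriv x) (p$3)"
definition "v2 = deriv (deriv y) (p$3)"
lemma d_eq: "d = Complex u2 v2" by (simp add: d_def dd_def u2_def v2_def)

lemma converse_point:
  assumes v0: "deriv y (p$3) = 0" and v20: "deriv (deriv y) (p$3) = 0"
    and nor: "\<forall>a. FS (sigma lam x y p) n (pd a (sigma lam x y) p) = 0"
  shows "mean_curv (sigma lam x y) p n = 0"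
proof -
  have vv: "v = 0" "v2 = 0" using v0 v20 by (simp_all add: v_def v2_def)
  have u0: "u \<noteq> 0" using nz vv by (simp add: u_def v_def)
  have n1: "Re (K1 n + of_real lam * K2 n) = 0" using nor[rule_format, of 1] by (simp add: FS_sym[of _ n] normal1)
  have n2: "Re (\<i> * (K1 n + of_real lam * K2 n)) = 0" using nor[rule_format, of 2] by (simp add: FS_sym[of _ n] normal2)
  have n3: "Re (c * K1 n) = 0" using nor[rule_format, of 3] by (simp add: FS_sym[of _ n] normal3)
  have W0: "K1 n + of_real lam * K2 n = 0" using n1 n2 by (simp add: complex_eq_iff)
  have RK: "Re (K1 n) = 0" using n3 u0 by (simp add: c_eq vv)
  have Inu: "Im nu = 0" unfolding nu_def c_eq d_eq vv by (simp add: Im_divide)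
  show ?thesis unfolding mean_split W0 using RK Inu by simp
qed

definition "n0 = ((- \<i> * c * of_real (B * (lam * (1 + A) - A))) * a1, (- \<i> * c * of_real (A * (lam * B - 1 - B))) * a2)"

lemma n0_1: "fst n0 / a1 = - \<i> * c * of_real (B * (lam * (1 + A) - A))" using a_nz by (simp add: n0_def)
lemma n0_2: "snd n0 / a2 = - \<i> * c * of_real (A * (lam * B - 1 - B))" using a_nz by (simp add: n0_def)

lemma K1n0: "K1 n0 = \<i> * of_real lam * cnj c * of_real (A * B / NN)"
  unfolding K1_def n0_1 n0_2 using N0 by (simp add: field_simps power2_eq_square, simp add: NN_def algebra_simps)
lemma K2n0: "K2 n0 = - \<i> * cnj c * of_real (A * B / NN)"
  unfolding K2_def n0_1 n0_2 using N0 by (simp add: field_simps power2_eq_square, simp add: NN_def algebra_simps)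

lemma n0_normal: "\<forall>a. FS (sigma lam x y p) n0 (pd a (sigma lam x y) p) = 0"
proof -
  have W0: "K1 n0 + of_real lam * K2 n0 = 0" unfolding K1n0 K2n0 by (simp add: algebra_simps)
  have "Re (c * K1 n0) = 0" unfolding K1n0 c_eq by (simp add: algebra_simps)
  then show ?thesis using W0 unfolding forall_3 by (simp add: FS_sym[of _ n0] normal1 normal2 normal3)
qed

lemma mean_n0: "mean_curv (sigma lam x y) p n0 = - (lam * A * B / NN) * ((beta * (u^2 + v^2) * v + P^2 * (v2 * u - u2 * v)) / DD)"
proof -
  have W0: "K1 n0 + of_real lam * K2 n0 = 0" unfolding K1n0 K2n0 by (simp add: algebra_simps)
  have "mean_curv (sigma lam x y) p n0 = Re (nu * K1 n0)" unfolding mean_split W0 by simp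
  also have "\<dots> = - (lam * A * B / NN) * Im (nu * cnj c)"
    unfolding K1n0 using N0 by (simp add: field_simps)
  also have "Im (nu * cnj c) = (beta * (u^2 + v^2) * v + P^2 * (v2 * u - u2 * v)) / DD"
    unfolding nu_def c_eq d_eq using DD_pos by (simp add: Im_divide power2_eq_square algebra_simps, simp add: field_simps)
  finally show ?thesis .
qed

lemma P_eq': "P = ppF lam A B / NN^2"
  unfolding P_def ppF_def ..

lemma beta_eq: "beta = numF lam A B / NN^4"
  unfolding beta_def P_eq' Q_def by (rule beta_alg[OF NN_def N0(2)])

lemma normal_cond:
  "\<exists>n. (\<forall>a. FS (sigma lam x y p) n (pd a (sigma lam x y) p) = 0) \<and>
     (mean_curv (sigma lam x y) p n = 0 \<longrightarrow>
       numF lam ((cmod (Z1 x y p))^2) ((cmod (Z2 lam p))^2) * ((deriv x (p$3))^2 + (deriv y (p$3))^2) * deriv y (p$3)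
       + (ppF lam ((cmod (Z1 x y p))^2) ((cmod (Z2 lam p))^2))^2 * (deriv (deriv y) (p$3) * deriv x (p$3) - deriv (deriv x) (p$3) * deriv y (p$3)) = 0)"
proof (intro exI conjI impI)
  show "\<forall>a. FS (sigma lam x y p) n0 (pd a (sigma lam x y) p) = 0" by (rule n0_normal)
  assume m: "mean_curv (sigma lam x y) p n0 = 0"
  have f: "lam * A * B / NN \<noteq> 0" using lam0 AB_pos NN_pos by simp
  have "(beta * (u^2 + v^2) * v + P^2 * (v2 * u - u2 * v)) / DD = 0"
    using m f unfolding mean_n0 by simp
  then have "beta * (u^2 + v^2) * v + P^2 * (v2 * u - u2 * v) = 0" using DD_pos by simp
  moreover have "beta * (u^2 + v^2) * v + P^2 * (v2 * u - u2 * v) = (numF lam A B * (u^2 + v^2) * v + (ppF lam A B)^2 * (v2 * u - u2 * v)) / NN^4"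
    unfolding beta_eq P_eq' power_divide by (simp add: add_divide_distrib flip: power_mult)
  ultimately have "(numF lam A B * (u^2 + v^2) * v + (ppF lam A B)^2 * (v2 * u - u2 * v)) / NN^4 = 0" by simp
  then have "numF lam A B * (u^2 + v^2) * v + (ppF lam A B)^2 * (v2 * u - u2 * v) = 0" using N0 by simp
  then show "numF lam ((cmod (Z1 x y p))^2) ((cmod (Z2 lam p))^2) * ((deriv x (p$3))^2 + (deriv y (p$3))^2) * deriv y (p$3)
       + (ppF lam ((cmod (Z1 x y p))^2) ((cmod (Z2 lam p))^2))^2 * (deriv (deriv y) (p$3) * deriv x (p$3) - deriv (deriv x) (p$3) * deriv y (p$3)) = 0"
    using N0 unfolding A_def B_def a1_def a2_def u_def v_def u2_def v2_def by simp
qed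

end


lemma smooth_deriv0: "smooth_on f I \<Longrightarrow> r \<in> I \<Longrightarrow> (f has_real_derivative deriv f r) (at r)"
  unfolding smooth_on_def using DERIV_deriv_iff_field_differentiable
  by (metis funpow_0)
lemma smooth_deriv1: "smooth_on f I \<Longrightarrow> r \<in> I \<Longrightarrow> (deriv f has_real_derivative deriv (deriv f) r) (at r)"
  unfolding smooth_on_def using DERIV_deriv_iff_field_differentiable
  by (metis funpow_0 funpow_Suc_right o_apply One_nat_def)

lemma exp_sq: "(exp (a::real))^2 = exp (2 * a)"
  unfolding power2_eq_square exp_add[symmetric] mult_2 ..

lemma Z1_norm: "(cmod (Z1 x y (vector [t0, 0, r])))^2 = exp (2 * t0 + 2 * x r)"
proof -
  have "cmod (Z1 x y (vector [t0, 0, r])) = exp (t0 + x r)"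
    unfolding Z1_def wv_def by simp
  moreover have "(exp (t0 + x r))^2 = exp (2 * t0 + 2 * x r)"
    unfolding exp_sq by (simp add: distrib_left)
  ultimately show ?thesis by simp
qed
lemma Z2_norm: "(cmod (Z2 lam (vector [t0, 0, r])))^2 = exp (2 * lam * t0)"
proof -
  have "cmod (Z2 lam (vector [t0, 0, r])) = exp (lam * t0)"
    unfolding Z2_def wv_def by simp
  moreover have "(exp (lam * t0))^2 = exp (2 * lam * t0)"
    unfolding exp_sq by (simp add: mult.assoc)
  ultimately show ?thesis by simp
qed

theorem mainTheorem7:
  fixes lam :: real and x y :: "real \<Rightarrow> real" and I :: "real set"
  assumes "lam \<noteq> 0" and "lam \<noteq> 1"
    and "open I" and "is_interval I" and "I \<noteq> {}"
    and "smooth_on x I" and "smooth_on y I"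
    and "\<forall>r\<in>I. (deriv x r, deriv y r) \<noteq> (0, 0)"
  shows "minimal_param (sigma lam x y) {p. p$3 \<in> I} \<longleftrightarrow> (\<exists>c. \<forall>r\<in>I. y r = c)"
proof -
  note lam0 = assms(1) and lam1 = assms(2) and oI = assms(3) and ivI = assms(4)
  have dx: "\<And>r. r \<in> I \<Longrightarrow> (x has_real_derivative deriv x r) (at r)" using assms(6) by (rule smooth_deriv0)
  have dy: "\<And>r. r \<in> I \<Longrightarrow> (y has_real_derivative deriv y r) (at r)" using assms(7) by (rule smooth_deriv0)
  have ddx: "\<And>r. r \<in> I \<Longrightarrow> (deriv x has_real_derivative deriv (deriv x) r) (at r)" using assms(6) by (rule smooth_deriv1)
  have ddy: "\<And>r. r \<in> I \<Longrightarrow> (deriv y has_real_derivative deriv (deriv y) r) (at r)" using assms(7) by (rule smooth_deriv1)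
  have nz: "\<And>r. r \<in> I \<Longrightarrow> (deriv x r, deriv y r) \<noteq> (0, 0)" using assms(8) by blast
  show ?thesis
  proof
    assume const: "\<exists>c. \<forall>r\<in>I. y r = c"
    then obtain c where c: "\<And>r. r \<in> I \<Longrightarrow> y r = c" by blast
    have y1: "deriv y r = 0" if r: "r \<in> I" for r
    proof -
      have "((\<lambda>_. c) has_real_derivative 0) (at r)" by simp
      then have "(y has_real_derivative 0) (at r)"
        by (rule has_field_derivative_transform_within_open[OF _ oI r]) (simp add: c)
      then show ?thesis by (rule DERIV_imp_deriv)
    qed
    have y2: "deriv (deriv y) r = 0" if r: "r \<in> I" for r
    proof -
      have "((\<lambda>_. 0) has_real_derivative 0) (at r)" by simp
      then have "(deriv y has_real_derivative 0) (at r)"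
        by (rule has_field_derivative_transform_within_open[OF _ oI r]) (simp add: y1)
      then show ?thesis by (rule DERIV_imp_deriv)
    qed
    show "minimal_param (sigma lam x y) {p. p$3 \<in> I}"
      unfolding minimal_param_def
    proof (intro ballI allI impI)
      fix p :: "real^3" and n
      assume pI: "p \<in> {p. p$3 \<in> I}" and nor: "\<forall>a. FS (sigma lam x y p) n (pd a (sigma lam x y) p) = 0"
      then have pI': "p$3 \<in> I" by simp
      show "mean_curv (sigma lam x y) p n = 0"
        by (rule converse_point[OF lam0 oI pI' dx dy nz[OF pI'] ddx[OF pI'] ddy[OF pI'] y1[OF pI'] y2[OF pI'] nor])
    qed
  next
    assume mini: "minimal_param (sigma lam x y) {p. p$3 \<in> I}"
    show "\<exists>c. \<forall>r\<in>I. y r = c"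
    proof (rule ccontr)
      assume ncst: "\<not> (\<exists>c. \<forall>r\<in>I. y r = c)"
      have "\<exists>r\<in>I. deriv y r \<noteq> 0"
      proof (rule ccontr)
        assume "\<not> (\<exists>r\<in>I. deriv y r \<noteq> 0)"
        then have "\<And>r. r \<in> I \<Longrightarrow> (y has_real_derivative 0) (at r within I)"
          using dy by (metis has_field_derivative_at_within)
        then have "\<exists>c. \<forall>r\<in>I. y r = c"
          by (intro has_field_derivative_zero_constant is_interval_convex ivI)
        then show False using ncst by blast
      qed
      then obtain r where rI: "r \<in> I" and yr: "deriv y r \<noteq> 0" by blast
      define w where "w = (deriv x r)^2 + (deriv y r)^2"
      define k where "k = deriv (deriv y) r * deriv x r - deriv (deriv x) r * deriv y r"
      have w0: "w > 0" using yr unfolding w_def by (simp add: add_nonneg_pos)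
      have eq: "numF lam (exp (2 * t0 + 2 * x r)) (exp (2 * lam * t0)) = (- k / (w * deriv y r)) * (ppF lam (exp (2 * t0 + 2 * x r)) (exp (2 * lam * t0)))^2" for t0
      proof -
        define p :: "real^3" where "p = vector [t0, 0, r]"
        have p3: "p$3 = r" unfolding p_def by simp
        have pI: "p$3 \<in> I" using p3 rI by simp
        obtain n where nor: "\<forall>a. FS (sigma lam x y p) n (pd a (sigma lam x y) p) = 0"
          and imp: "mean_curv (sigma lam x y) p n = 0 \<longrightarrow>
       numF lam ((cmod (Z1 x y p))^2) ((cmod (Z2 lam p))^2) * ((deriv x (p$3))^2 + (deriv y (p$3))^2) * deriv y (p$3)
       + (ppF lam ((cmod (Z1 x y p))^2) ((cmod (Z2 lam p))^2))^2 * (deriv (deriv y) (p$3) * deriv x (p$3) - deriv (deriv x) (p$3) * deriv y (p$3)) = 0"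
          using normal_cond[OF lam0 oI pI dx dy nz[OF pI] ddx[OF pI] ddy[OF pI]] by blast
        have "mean_curv (sigma lam x y) p n = 0" using mini pI nor unfolding minimal_param_def by blast
        with imp have "numF lam (exp (2 * t0 + 2 * x r)) (exp (2 * lam * t0)) * w * deriv y r
            + (ppF lam (exp (2 * t0 + 2 * x r)) (exp (2 * lam * t0)))^2 * k = 0"
          unfolding p3 w_def k_def using Z1_norm Z2_norm p_def by simp
        then show ?thesis using w0 yr by (simp add: field_simps)
      qed
      then show False using F_nonconst[OF lam0 lam1, of "x r" "- k / (w * deriv y r)"] by blast
    qed
  qed
qed


end
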